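(* Let $B\in\mathbb{R}^{n\times n}$ be symmetric, $b\in\mathbb{R}^n$, $d\in\mathbb{R}$, $h(x)=x^TBx+2b^Tx+d$, and let $\alpha\le\beta$ be real numbers. Then there exists $\overline{x}\in\mathbb{R}^n$ with $\alpha<h(\overline{x})<\beta$ if and only if there exist $\widehat{x}\in\mathbb{R}^n$ and a symmetric matrix $\widehat{X}\in\mathbb{R}^{n\times n}$ with $\widehat{X}-\widehat{x}\widehat{x}^T$ positive definite such that $\alpha< B\bullet\widehat{X}+2b^T\widehat{x}+d<\beta$.
   Context: For matrices $M,N\in\mathbb{R}^{n\times n}$, $M\bullet N=\sum_{i,j}m_{ij}n_{ij}$. *)

theory Defs
  imports "HOL-Analysis.Analysis"
begin

definition frob_inner :: "real^'n^'n \<Rightarrow> real^'n^'n \<Rightarrow> real" where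
  "frob_inner M N = (\<Sum>i\<in>UNIV. \<Sum>j\<in>UNIV. M $ i $ j * N $ i $ j)"

definition sym_mat :: "real^'n^'n \<Rightarrow> bool" where
  "sym_mat A \<longleftrightarrow> transpose A = A"

definition pos_def_mat :: "real^'n^'n \<Rightarrow> bool" where
  "pos_def_mat A \<longleftrightarrow> sym_mat A \<and> (\<forall>x. x \<noteq> 0 \<longrightarrow> x \<bullet> (A *v x) > 0)"

definition outer :: "real^'n \<Rightarrow> real^'n \<Rightarrow> real^'n^'n" where
  "outer x y = (\<chi> i j. x $ i * y $ j)"

end

theory Submission
  imports Defs
begin
definition qf :: "'a set \<Rightarrow> ('a \<Rightarrow> 'a \<Rightarrow> real) \<Rightarrow> ('a \<Rightarrow> real) \<Rightarrow> real" where
  "qf S P v = (\<Sum>i\<in>S. \<Sum>j\<in>S. v i * P i j * v j)"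

lemma qf_restrict:
  assumes "finite S" "k \<notin> S"
  shows "qf (insert k S) A (v(k:=0)) = qf S A v"
proof -
  have e: "\<And>i. i \<in> S \<Longrightarrow> (i = k) = False" using assms(2) by auto
  show ?thesis using assms
    by (simp add: qf_def sum.insert e cong: sum.cong)
qed

lemma qf_insert:
  assumes "finite S" "k \<notin> S"
  shows "qf (insert k S) P w = w k * P k k * w k + (\<Sum>j\<in>S. w k * P k j * w j)
     + (\<Sum>i\<in>S. w i * P i k * w k) + qf S P w"
  using assms by (simp add: qf_def sum.insert sum.distrib algebra_simps)

lemma key:
  assumes "finite S" "\<forall>v. 0 \<le> qf S A v" "\<forall>v. (\<exists>i\<in>S. v i \<noteq> 0) \<longrightarrow> 0 < qf S P v"
    "\<forall>i j. P i j = P j i"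
  shows "0 \<le> (\<Sum>i\<in>S. \<Sum>j\<in>S. A i j * P i j)"
  using assms
proof (induction S arbitrary: P rule: finite_induct)
  case empty
  then show ?case by simp
next
  case (insert k S)
  define p where "p = P k k"
  have "0 < qf (insert k S) P (\<lambda>i. if i = k then 1 else 0)"
    using insert.prems(2) by auto
  moreover have "qf (insert k S) P (\<lambda>i. if i = k then 1 else 0) = p"
  proof -
    have e: "\<And>i. i \<in> S \<Longrightarrow> (i = k) = False" using insert.hyps by auto
    show ?thesis using insert.hyps by (subst qf_insert) (simp_all add: p_def qf_def e cong: sum.cong)
  qed
  ultimately have pp: "p > 0" by simp
  define P' where "P' i j = P i j - P i k * P j k / p" for i j
  have symP': "\<forall>i j. P' i j = P' j i" using insert.prems(3) by (auto simp: P'_def)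
  have pdP': "\<forall>v. (\<exists>i\<in>S. v i \<noteq> 0) \<longrightarrow> 0 < qf S P' v"
  proof (intro allI impI)
    fix v :: "'a \<Rightarrow> real" assume ex: "\<exists>i\<in>S. v i \<noteq> 0"
    define s where "s = (\<Sum>i\<in>S. v i * P i k)"
    define w where "w = v(k := - s / p)"
    have wS: "\<And>i. i \<in> S \<Longrightarrow> w i = v i" using insert.hyps by (auto simp: w_def)
    have "\<exists>i\<in>insert k S. w i \<noteq> 0" using ex wS by auto
    hence pos: "0 < qf (insert k S) P w" using insert.prems(2) by blast
    have s2: "(\<Sum>j\<in>S. P k j * v j) = s"
      unfolding s_def using insert.prems(3) by (auto intro!: sum.cong)
    have "qf (insert k S) P w = s * s / p - (s / p) * s - (s / p) * s + qf S P v"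
    proof -
      have a: "qf S P w = qf S P v" unfolding qf_def using wS by (auto intro!: sum.cong)
      have b: "(\<Sum>j\<in>S. w k * P k j * w j) = - (s / p) * s"
        using wS s2[symmetric] by (simp add: w_def sum_distrib_left mult.assoc)
      have c: "(\<Sum>i\<in>S. w i * P i k * w k) = - (s / p) * s"
      proof -
        have "(\<Sum>i\<in>S. w i * P i k * w k) = (\<Sum>i\<in>S. v i * P i k) * w k"
          using wS by (simp add: sum_distrib_right)
        then show ?thesis by (simp add: w_def s_def[symmetric])
      qed
      have d: "w k * P k k * w k = s * s / p" using pp by (simp add: w_def p_def[symmetric] field_simps power2_eq_square)
      show ?thesis using insert.hyps by (simp add: qf_insert a b c d)
    qed
    also have "\<dots> = qf S P' v"
    proof -
      have "qf S P' v = qf S P v - (\<Sum>i\<in>S. \<Sum>j\<in>S. (v i * P i k) * (v j * P j k)) / p"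
        unfolding qf_def P'_def
        by (simp add: sum_subtractf sum_divide_distrib algebra_simps)
      also have "(\<Sum>i\<in>S. \<Sum>j\<in>S. (v i * P i k) * (v j * P j k)) = s * s"
        by (simp add: s_def sum_product)
      finally show ?thesis by simp
    qed
    finally show "0 < qf S P' v" using pos by simp
  qed
  have psdA: "\<forall>v. 0 \<le> qf S A v"
    using insert.prems(1) qf_restrict[OF insert.hyps] by metis
  have IH: "0 \<le> (\<Sum>i\<in>S. \<Sum>j\<in>S. A i j * P' i j)"
    using insert.IH[OF psdA pdP' symP'] .
  have z1: "\<And>j. P' k j = 0" using pp insert.prems(3) by (simp add: P'_def p_def)
  have z2: "\<And>i. P' i k = 0" using pp by (simp add: P'_def p_def)
  have split: "(\<Sum>i\<in>insert k S. \<Sum>j\<in>insert k S. A i j * P i j)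
      = (\<Sum>i\<in>insert k S. \<Sum>j\<in>insert k S. A i j * P' i j)
        + qf (insert k S) A (\<lambda>i. P i k) / p"
    unfolding qf_def P'_def
    by (simp add: sum_divide_distrib sum.distrib[symmetric] algebra_simps insert.prems(3)[rule_format, of k])
  have "(\<Sum>i\<in>insert k S. \<Sum>j\<in>insert k S. A i j * P' i j) = (\<Sum>i\<in>S. \<Sum>j\<in>S. A i j * P' i j)"
    using insert.hyps by (simp add: z1 z2)
  moreover have "0 \<le> qf (insert k S) A (\<lambda>i. P i k) / p" using insert.prems(1) pp by simp
  ultimately show ?case using split IH by linarith
qed
lemma qform_sum: "(x::real^'n) \<bullet> (M *v y) = (\<Sum>i\<in>UNIV. \<Sum>j\<in>UNIV. x$i * M$i$j * y$j)"
  by (simp add: inner_vec_def matrix_vector_mult_def sum_distrib_left mult.assoc)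

lemma frob_outer: "frob_inner B (outer x x) = (x::real^'n) \<bullet> (B *v x)"
  by (simp add: frob_inner_def outer_def qform_sum algebra_simps)

lemma sym_swap: assumes "sym_mat B" shows "(x::real^'n) \<bullet> (B *v y) = y \<bullet> (B *v x)"
proof -
  have "\<And>i j. B$i$j = B$j$i" using assms unfolding sym_mat_def
    by (metis transpose_def vec_lambda_beta)
  then show ?thesis unfolding qform_sum
    by (subst sum.swap) (simp add: algebra_simps)
qed

lemma expand:
  assumes "sym_mat B"
  shows "(x + t *\<^sub>R v) \<bullet> (B *v (x + t *\<^sub>R v)) =
     x \<bullet> (B *v x) + 2 * t * (v \<bullet> (B *v x)) + t^2 * (v \<bullet> (B *v v))"
  using sym_swap[OF assms, of x v]
  by (simp add: matrix_vector_right_distrib matrix_vector_mult_scaleR inner_add_left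
      inner_add_right algebra_simps power2_eq_square)

lemma quad_bound:
  fixes a b c M :: real
  assumes "\<forall>t. a * t^2 + b * t + c \<le> M"
  shows "a \<le> 0"
proof (rule ccontr)
  assume "\<not> a \<le> 0" hence a: "a > 0" by simp
  define t where "t = max 1 ((\<bar>b\<bar> + \<bar>c - M\<bar> + 1) / a)"
  have t1: "t \<ge> 1" by (simp add: t_def)
  have "(\<bar>b\<bar> + \<bar>c - M\<bar> + 1) / a \<le> t" by (simp add: t_def)
  hence "a * ((\<bar>b\<bar> + \<bar>c - M\<bar> + 1) / a) \<le> a * t"
    using mult_left_mono a by (metis less_imp_le)
  hence t2: "a * t \<ge> \<bar>b\<bar> + \<bar>c - M\<bar> + 1" using a by simp
  define K where "K = \<bar>b\<bar> + \<bar>c - M\<bar> + 1"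
  have "a * t^2 = (a*t) * t" by (simp add: power2_eq_square)
  also have "\<dots> \<ge> K * t" using t1 t2 unfolding K_def by (simp add: mult_right_mono)
  finally have e1: "a * t^2 \<ge> K * t" .
  have e2: "K * t = \<bar>b\<bar> * t + (\<bar>c - M\<bar> + 1) * t" unfolding K_def by (simp add: distrib_right)
  have e3: "(\<bar>c - M\<bar> + 1) * t \<ge> \<bar>c - M\<bar> + 1"
    using t1 mult_left_mono[of 1 t "\<bar>c - M\<bar> + 1"] by simp
  have e4: "\<bar>b\<bar> * t \<ge> - b * t" using t1 mult_right_mono[of "-b" "\<bar>b\<bar>" t] by simp
  have "\<bar>c - M\<bar> \<ge> M - c" by simp
  hence "a * t^2 + b * t + c > M" using e1 e2 e3 e4 by linarith
  with assms show False by (metis not_le)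
qed


lemma sym_entries: "sym_mat P \<Longrightarrow> P$i$j = P$j$i"
  unfolding sym_mat_def by (metis transpose_def vec_lambda_beta)

lemma trace_sign:
  fixes A P :: "real^'n^'n"
  assumes psd: "\<forall>v. 0 \<le> v \<bullet> (A *v v)" and pd: "pos_def_mat P"
  shows "0 \<le> frob_inner A P"
proof -
  have q: "qf UNIV (\<lambda>i j. M$i$j) v = (\<chi> i. v i) \<bullet> (M *v (\<chi> i. v i))" for M :: "real^'n^'n" and v
    by (simp add: qf_def qform_sum)
  have "0 \<le> (\<Sum>i\<in>UNIV. \<Sum>j\<in>UNIV. A$i$j * P$i$j)"
  proof (rule key)
    show "\<forall>v. 0 \<le> qf UNIV (\<lambda>i j. A$i$j) v" using psd q by simp
    show "\<forall>v. (\<exists>i\<in>UNIV. v i \<noteq> 0) \<longrightarrow> 0 < qf UNIV (\<lambda>i j. P$i$j) v"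
    proof (intro allI impI)
      fix v :: "'n \<Rightarrow> real" assume "\<exists>i\<in>UNIV. v i \<noteq> 0"
      then obtain i where "v i \<noteq> 0" by blast
      hence "(\<chi> i. v i) \<noteq> 0" by (metis vec_lambda_beta zero_index)
      thus "0 < qf UNIV (\<lambda>i j. P$i$j) v" using pd q unfolding pos_def_mat_def by simp
    qed
    show "\<forall>i j. P$i$j = P$j$i" using pd sym_entries unfolding pos_def_mat_def by blast
  qed simp
  thus ?thesis by (simp add: frob_inner_def)
qed

lemma frob_add: "frob_inner B (X + Y) = frob_inner B X + frob_inner B Y"
  by (simp add: frob_inner_def sum.distrib distrib_left)

lemma frob_neg: "frob_inner (-B) X = - frob_inner B X"
  by (simp add: frob_inner_def sum_negf)

lemma frob_id: "frob_inner B (e *\<^sub>R mat 1) = e * (\<Sum>i\<in>UNIV. B$i$i)"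
  by (simp add: frob_inner_def mat_def sum_distrib_left if_distrib mult.commute cong: if_cong)

theorem lemma1:
  fixes B :: "real^'n^'n" and b :: "real^'n" and d :: real
    and h :: "real^'n \<Rightarrow> real" and \<alpha> \<beta> :: real
  assumes "sym_mat B"
    and "\<And>x. h x = x \<bullet> (B *v x) + 2 * (b \<bullet> x) + d"
    and "\<alpha> \<le> \<beta>"
  shows "(\<exists>x. \<alpha> < h x \<and> h x < \<beta>) \<longleftrightarrow>
         (\<exists>x X. sym_mat X \<and> pos_def_mat (X - outer x x) \<and>
                 \<alpha> < frob_inner B X + 2 * (b \<bullet> x) + d \<and>
                 frob_inner B X + 2 * (b \<bullet> x) + d < \<beta>)"
proof
  assume "\<exists>x. \<alpha> < h x \<and> h x < \<beta>"
  then obtain x where x: "\<alpha> < h x" "h x < \<beta>" by blast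
  define T where "T = (\<Sum>i\<in>UNIV. B$i$i)"
  define g where "g = min (h x - \<alpha>) (\<beta> - h x)"
  have g: "g > 0" using x by (simp add: g_def)
  define e where "e = g / (2 * (\<bar>T\<bar> + 1))"
  have e: "e > 0" using g by (simp add: e_def)
  have eT: "e * \<bar>T\<bar> < g"
  proof -
    have "e * \<bar>T\<bar> = g * (\<bar>T\<bar> / (2 * (\<bar>T\<bar> + 1)))" by (simp add: e_def)
    also have "\<dots> < g * 1" using g by (intro mult_strict_left_mono) (auto simp: field_simps)
    finally show ?thesis by simp
  qed
  define X where "X = outer x x + e *\<^sub>R mat 1"
  have symX: "sym_mat X"
    by (simp add: sym_mat_def X_def transpose_def outer_def vec_eq_iff mat_def)
  have dX: "X - outer x x = e *\<^sub>R mat 1" by (simp add: X_def)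
  have pdX: "pos_def_mat (X - outer x x)"
    unfolding dX pos_def_mat_def
  proof
    show "sym_mat (e *\<^sub>R mat 1)" by (simp add: sym_mat_def transpose_scalar)
    show "\<forall>v::real^'n. v \<noteq> 0 \<longrightarrow> 0 < v \<bullet> ((e *\<^sub>R mat 1) *v v)"
    proof (intro allI impI)
      fix v :: "real^'n" assume "v \<noteq> 0"
      have "(e *\<^sub>R mat 1) *v v = e *\<^sub>R v"
        by (metis scaleR_matrix_vector_assoc matrix_vector_mul_lid)
      thus "0 < v \<bullet> ((e *\<^sub>R mat 1) *v v)" using e \<open>v \<noteq> 0\<close> by simp
    qed
  qed
  have val: "frob_inner B X + 2 * (b \<bullet> x) + d = h x + e * T"
    by (simp add: X_def frob_add frob_outer frob_id assms(2) T_def)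
  have "\<bar>e * T\<bar> < g" using eT e by (simp add: abs_mult)
  hence "\<alpha> < h x + e * T \<and> h x + e * T < \<beta>" unfolding g_def by (auto simp: abs_less_iff)
  thus "\<exists>x X. sym_mat X \<and> pos_def_mat (X - outer x x) \<and>
                 \<alpha> < frob_inner B X + 2 * (b \<bullet> x) + d \<and>
                 frob_inner B X + 2 * (b \<bullet> x) + d < \<beta>"
    using symX pdX val by metis
next
  assume "\<exists>x X. sym_mat X \<and> pos_def_mat (X - outer x x) \<and>
                 \<alpha> < frob_inner B X + 2 * (b \<bullet> x) + d \<and>
                 frob_inner B X + 2 * (b \<bullet> x) + d < \<beta>"
  then obtain x X where pd: "pos_def_mat (X - outer x x)"
    and v1: "\<alpha> < frob_inner B X + 2 * (b \<bullet> x) + d"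
    and v2: "frob_inner B X + 2 * (b \<bullet> x) + d < \<beta>" by blast
  define P where "P = X - outer x x"
  have "X = P + outer x x" by (simp add: P_def)
  hence val: "frob_inner B X + 2 * (b \<bullet> x) + d = h x + frob_inner B P"
    by (simp add: frob_add frob_outer assms(2))
  have hexp: "h (y + t *\<^sub>R v) = (v \<bullet> (B *v v)) * t^2 + (2 * (v \<bullet> (B *v y)) + 2 * (b \<bullet> v)) * t + h y"
    for y v t
    using expand[OF assms(1), of y t v] by (simp add: assms(2) inner_add_right algebra_simps)
  show "\<exists>x. \<alpha> < h x \<and> h x < \<beta>"
  proof (rule ccontr)
    assume no: "\<not> (\<exists>x. \<alpha> < h x \<and> h x < \<beta>)"
    show False
    proof (cases "\<forall>y. h y \<le> \<alpha>")
      case True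
      have "\<forall>v. 0 \<le> v \<bullet> ((-B) *v v)"
      proof
        fix v
        have "\<forall>t. (v \<bullet> (B *v v)) * t^2 + (2 * (v \<bullet> (B *v x)) + 2 * (b \<bullet> v)) * t + h x \<le> \<alpha>"
          using True hexp by metis
        from quad_bound[OF this] show "0 \<le> v \<bullet> ((-B) *v v)"
          by (simp add: matrix_vector_mult_diff_rdistrib[of 0 B, simplified])
      qed
      from trace_sign[OF this pd[folded P_def]] have "frob_inner B P \<le> 0" by (simp add: frob_neg)
      with True[rule_format, of x] val v1 show False by linarith
    next
      case F1: False
      then obtain p where p: "h p > \<alpha>" by (auto simp: not_le)
      show False
      proof (cases "\<forall>y. h y \<ge> \<beta>")
        case True
        have "\<forall>v. 0 \<le> v \<bullet> (B *v v)"
        proof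
          fix v
          have "\<forall>t. (- (v \<bullet> (B *v v))) * t^2 + (- (2 * (v \<bullet> (B *v x)) + 2 * (b \<bullet> v))) * t + (- h x) \<le> - \<beta>"
            using True hexp by (metis minus_add_distrib mult_minus_left neg_le_iff_le)
          from quad_bound[OF this] show "0 \<le> v \<bullet> (B *v v)" by simp
        qed
        from trace_sign[OF this pd[folded P_def]] have "frob_inner B P \<ge> 0" by simp
        with True[rule_format, of x] val v2 show False by linarith
      next
        case False
        then obtain q where q: "h q < \<beta>" by (auto simp: not_le)
        have pb: "h p \<ge> \<beta>" using p no by force
        have qa: "h q \<le> \<alpha>" using q no by force
        define c where "c = (\<alpha> + \<beta>) / 2"
        have ab: "\<alpha> < \<beta>" using v1 v2 by linarith
        define f where "f t = h (q + t *\<^sub>R (p - q))" for t :: real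
        have f: "f t = ((p - q) \<bullet> (B *v (p - q))) * t^2 + (2 * ((p - q) \<bullet> (B *v q)) + 2 * (b \<bullet> (p - q))) * t + h q" for t
          unfolding f_def by (rule hexp)
        have cont: "continuous_on {0..1} f" unfolding f by (intro continuous_intros)
        have "f 0 \<le> c" "c \<le> f 1" using qa pb ab by (simp_all add: f_def c_def)
        from IVT'[of f 0 c 1, OF this _ cont] obtain t where ft: "f t = c" by auto
        have "\<alpha> < c" using ab by (simp add: c_def)
        moreover have "c < \<beta>" using ab by (simp add: c_def)
        ultimately
        show False using no ft unfolding f_def by metis
      qed
    qed
  qed
qed

end
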